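(* Let $n\geq 4$ and let $\nu :B_n\to GL_{n+1}(\mathbb{C})$ be a non-trivial homogeneous $3$-local representation of $B_n$. Then $\nu$ is equivalent to one of the eight representations $\nu_j$, $1\leq j\leq 8$, given by $\nu_j(\sigma_i)=\mathrm{diag}(I_{i-1},M_j,I_{n-i-1})$ for all $1\leq i \leq n-1$, where: (1) $M_1=\begin{pmatrix} 1&0&0\\ 0&m_{22}&m_{23}\\ 0&\frac{1-m_{22}}{m_{23}}&0\end{pmatrix}$, with $m_{22}\neq1$, $m_{23}\neq0$; (2) $M_2=\begin{pmatrix} 0&m_{12}&0\\ \frac{1-m_{22}}{m_{12}}&m_{22}&0\\ 0&0&1\end{pmatrix}$, with $m_{22}\neq1$, $m_{12}\neq0$; (3) $M_3=\begin{pmatrix} 1&-\frac{m_{22}}{m_{32}}&0\\ 0&m_{22}&0\\ 0&m_{32}&1\end{pmatrix}$, with $m_{22}m_{32}\neq0$; (4) $M_4=\begin{pmatrix} 1&0&0\\ -\frac{m_{22}}{m_{23}}&m_{22}&m_{23}\\ 0&0&1\end{pmatrix}$, with $m_{23}m_{22}\neq0$; (5) $M_5=\begin{pmatrix} 1&0&0\\ 0&0&m_{23}\\ 0&m_{32}&1-m_{23}m_{32}\end{pmatrix}$, with $m_{23}m_{32}\neq0$; (6) $M_6=\begin{pmatrix} 1-m_{12}m_{21}&m_{12}&0\\ m_{21}&0&0\\ 0&0&1\end{pmatrix}$, with $m_{12}m_{21}\neq0$; (7) $M_7=\begin{pmatrix} 1&0&0\\ 0&0&m_{23}\\ 0&m_{32}&0\end{pmatrix}$,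 with $m_{23}m_{32}\neq0$; (8) $M_8=\begin{pmatrix} 0&m_{12}&0\\ m_{21}&0&0\\ 0&0&1\end{pmatrix}$, with $m_{12}m_{21}\neq0$; all entries being complex numbers.
   Context: The braid group $B_n$ has generators $\sigma_1,\dots,\sigma_{n-1}$ with relations $\sigma_i\sigma_{i+1}\sigma_i=\sigma_{i+1}\sigma_i\sigma_{i+1}$ ($1\le i\le n-2$) and $\sigma_i\sigma_j=\sigma_j\sigma_i$ ($|i-j|\ge2$). A representation $\nu:B_n\to GL_{n+1}(\mathbb{C})$ is homogeneous $3$-local if there is a matrix $M\in M_3(\mathbb{C})$ with $\nu(\sigma_i)=\mathrm{diag}(I_{i-1},M,I_{n-i-1})$ (block diagonal, $I_r$ the $r\times r$ identity) for all $1\le i\le n-1$. "Non-trivial" means not sending every $\sigma_i$ to the identity. Two representations are equivalent if they are conjugate by a fixed invertible matrix. *)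

theory Defs
  imports Complex_Main "Jordan_Normal_Form.Matrix"
begin

text \<open>A representation of the braid group B_n into GL_{n+1}(C) is recorded by the images
  nu i of the standard generators sigma_i (1 <= i <= n-1).  By the presentation of B_n,
  an assignment of matrices to the generators extends to a homomorphism iff the images are
  invertible and satisfy the braid relations.\<close>

definition braid_rep :: "nat \<Rightarrow> (nat \<Rightarrow> complex mat) \<Rightarrow> bool" where
  "braid_rep n nu \<longleftrightarrow>
     (\<forall>i\<in>{1..n-1}. nu i \<in> carrier_mat (n+1) (n+1) \<and> invertible_mat (nu i)) \<and>
     (\<forall>i\<in>{1..n-2}. nu i * nu (i+1) * nu i = nu (i+1) * nu i * nu (i+1)) \<and>
     (\<forall>i\<in>{1..n-1}. \<forall>j\<in>{1..n-1}. (i + 2 \<le> j \<or> j + 2 \<le> i) \<longrightarrow> nu i * nu j = nu j * nu i)"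

text \<open>diag(I_{i-1}, M, I_{n-i-1}) as an (n+1)x(n+1) matrix (0-based rows/cols i-1, i, i+1
  carry the block M).\<close>
definition local_mat :: "nat \<Rightarrow> complex mat \<Rightarrow> nat \<Rightarrow> complex mat" where
  "local_mat n M i = mat (n+1) (n+1) (\<lambda>(r,c).
     if i - 1 \<le> r \<and> r \<le> i + 1 \<and> i - 1 \<le> c \<and> c \<le> i + 1
     then M $$ (r - (i - 1), c - (i - 1))
     else (if r = c then 1 else 0))"

definition homogeneous_3_local :: "nat \<Rightarrow> (nat \<Rightarrow> complex mat) \<Rightarrow> bool" where
  "homogeneous_3_local n nu \<longleftrightarrow>
     (\<exists>M \<in> carrier_mat 3 3. \<forall>i\<in>{1..n-1}. nu i = local_mat n M i)"

definition nontrivial_rep :: "nat \<Rightarrow> (nat \<Rightarrow> complex mat) \<Rightarrow> bool" where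
  "nontrivial_rep n nu \<longleftrightarrow> (\<exists>i\<in>{1..n-1}. nu i \<noteq> 1\<^sub>m (n+1))"

definition equiv_rep :: "nat \<Rightarrow> (nat \<Rightarrow> complex mat) \<Rightarrow> (nat \<Rightarrow> complex mat) \<Rightarrow> bool" where
  "equiv_rep n nu mu \<longleftrightarrow>
     (\<exists>P Q. P \<in> carrier_mat (n+1) (n+1) \<and> Q \<in> carrier_mat (n+1) (n+1) \<and>
        P * Q = 1\<^sub>m (n+1) \<and> Q * P = 1\<^sub>m (n+1) \<and>
        (\<forall>i\<in>{1..n-1}. mu i = P * nu i * Q))"

definition M1 :: "complex \<Rightarrow> complex \<Rightarrow> complex mat" where
  "M1 m22 m23 = mat_of_rows_list 3 [[1,0,0],[0,m22,m23],[0,(1-m22)/m23,0]]"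
definition M2 :: "complex \<Rightarrow> complex \<Rightarrow> complex mat" where
  "M2 m22 m12 = mat_of_rows_list 3 [[0,m12,0],[(1-m22)/m12,m22,0],[0,0,1]]"
definition M3 :: "complex \<Rightarrow> complex \<Rightarrow> complex mat" where
  "M3 m22 m32 = mat_of_rows_list 3 [[1,-(m22/m32),0],[0,m22,0],[0,m32,1]]"
definition M4 :: "complex \<Rightarrow> complex \<Rightarrow> complex mat" where
  "M4 m22 m23 = mat_of_rows_list 3 [[1,0,0],[-(m22/m23),m22,m23],[0,0,1]]"
definition M5 :: "complex \<Rightarrow> complex \<Rightarrow> complex mat" where
  "M5 m23 m32 = mat_of_rows_list 3 [[1,0,0],[0,0,m23],[0,m32,1-m23*m32]]"
definition M6 :: "complex \<Rightarrow> complex \<Rightarrow> complex mat" where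
  "M6 m12 m21 = mat_of_rows_list 3 [[1-m12*m21,m12,0],[m21,0,0],[0,0,1]]"
definition M7 :: "complex \<Rightarrow> complex \<Rightarrow> complex mat" where
  "M7 m23 m32 = mat_of_rows_list 3 [[1,0,0],[0,0,m23],[0,m32,0]]"
definition M8 :: "complex \<Rightarrow> complex \<Rightarrow> complex mat" where
  "M8 m12 m21 = mat_of_rows_list 3 [[0,m12,0],[m21,0,0],[0,0,1]]"

definition standard_blocks :: "complex mat set" where
  "standard_blocks =
     {M1 m22 m23 | m22 m23. m22 \<noteq> 1 \<and> m23 \<noteq> 0} \<union>
     {M2 m22 m12 | m22 m12. m22 \<noteq> 1 \<and> m12 \<noteq> 0} \<union>
     {M3 m22 m32 | m22 m32. m22 * m32 \<noteq> 0} \<union>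
     {M4 m22 m23 | m22 m23. m23 * m22 \<noteq> 0} \<union>
     {M5 m23 m32 | m23 m32. m23 * m32 \<noteq> 0} \<union>
     {M6 m12 m21 | m12 m21. m12 * m21 \<noteq> 0} \<union>
     {M7 m23 m32 | m23 m32. m23 * m32 \<noteq> 0} \<union>
     {M8 m12 m21 | m12 m21. m12 * m21 \<noteq> 0}"

end

theory Submission
  imports Defs
begin


lemma inb1: "m22 \<noteq> 1 \<Longrightarrow> m23 \<noteq> 0 \<Longrightarrow> M1 m22 m23 \<in> standard_blocks" by (auto simp: standard_blocks_def)
lemma inb2: "m22 \<noteq> 1 \<Longrightarrow> m12 \<noteq> 0 \<Longrightarrow> M2 m22 m12 \<in> standard_blocks" by (auto simp: standard_blocks_def)
lemma inb3: "m22 * m32 \<noteq> 0 \<Longrightarrow> M3 m22 m32 \<in> standard_blocks" by (auto simp: standard_blocks_def)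
lemma inb4: "m23 * m22 \<noteq> 0 \<Longrightarrow> M4 m22 m23 \<in> standard_blocks" by (auto simp: standard_blocks_def)
lemma inb5: "m23 * m32 \<noteq> 0 \<Longrightarrow> M5 m23 m32 \<in> standard_blocks" by (auto simp: standard_blocks_def)
lemma inb6: "m12 * m21 \<noteq> 0 \<Longrightarrow> M6 m12 m21 \<in> standard_blocks" by (auto simp: standard_blocks_def)
lemma inb7: "m23 * m32 \<noteq> 0 \<Longrightarrow> M7 m23 m32 \<in> standard_blocks" by (auto simp: standard_blocks_def)
lemma inb8: "m12 * m21 \<noteq> 0 \<Longrightarrow> M8 m12 m21 \<in> standard_blocks" by (auto simp: standard_blocks_def)

lemma classify:
  fixes a b c d e f g h k :: complex
  assumes c0: "c = 0" and g0: "g = 0"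
    and C1: "f * (a - 1) = 0" and C2: "f * b = 0" and C3: "d * h = 0" and C4: "d * (k - 1) = 0"
    and C5: "(k - 1) * b = 0" and C6: "(a - 1) * h = 0"
    and E00: "a*a + a*b*d = a"
    and E01: "a*b*e + b*b*h = 0"
    and E10: "a*d*e + d*d*f = 0"
    and E11: "b*d + a*e*e + d*e*f + b*e*h + e*f*h = a*a*e + a*b*h + a*d*f + b*d*k"
    and E22: "a*f*h + d*f*k + b*h*k + e*k*k = b*d*e + b*e*h + d*e*f + e*e*k + f*h"
    and E23: "d*f*f + e*f*k = 0"
    and E32: "b*h*h + e*h*k = 0"
    and E33: "k = f*h*k + k*k"
    and R0: "\<not> (a = 0 \<and> b = 0 \<and> c = 0)" and R1: "\<not> (d = 0 \<and> e = 0 \<and> f = 0)"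
    and R2: "\<not> (g = 0 \<and> h = 0 \<and> k = 0)"
    and K0: "\<not> (a = 0 \<and> d = 0 \<and> g = 0)" and K1: "\<not> (b = 0 \<and> e = 0 \<and> h = 0)"
    and K2: "\<not> (c = 0 \<and> f = 0 \<and> k = 0)"
    and NT: "\<not> (a = 1 \<and> b = 0 \<and> c = 0 \<and> d = 0 \<and> e = 1 \<and> f = 0 \<and> g = 0 \<and> h = 0 \<and> k = 1)"
  shows "mat_of_rows_list 3 [[a,b,c],[d,e,f],[g,h,k]] \<in> standard_blocks"
proof (cases "f = 0")
  case False
  then have a1: "a = 1" and b0: "b = 0" using C1 C2 by auto
  show ?thesis
  proof (cases "d = 0")
    case False
    then have h0: "h = 0" and k1: "k = 1" using C3 C4 by auto
    have e0: "e \<noteq> 0" using K1 b0 h0 by auto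
    have "d*(e + d*f) = 0" using E10 a1 by (simp add: algebra_simps)
    then have "e = - d*f" using \<open>d \<noteq> 0\<close> by (simp add: eq_neg_iff_add_eq_0)
    then have dd: "d = -(e/f)" using \<open>f \<noteq> 0\<close> by (simp add: field_simps)
    have "mat_of_rows_list 3 [[a,b,c],[d,e,f],[g,h,k]] = M4 e f"
      by (simp add: M4_def a1 b0 c0 g0 h0 k1 dd)
    then show ?thesis using inb4[of f e] e0 \<open>f \<noteq> 0\<close> by simp
  next
    case True
    note d0 = True
    have ek: "e * k = 0" using E23 d0 \<open>f \<noteq> 0\<close> by simp
    have E11': "e*(e + f*h - 1) = 0" using E11 a1 b0 d0 by (simp add: algebra_simps)
    show ?thesis
    proof (cases "e = 0")
      case True
      have hne: "h \<noteq> 0" using K1 b0 True by auto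
      have "k * (1 - f*h - k) = 0" using E33 by (simp add: algebra_simps)
      then consider "k = 0" | "k = 1 - f*h" by auto
      then show ?thesis
      proof cases
        case 1
        have "mat_of_rows_list 3 [[a,b,c],[d,e,f],[g,h,k]] = M7 f h"
          by (simp add: M7_def a1 b0 c0 g0 d0 True 1)
        then show ?thesis using inb7[of f h] hne \<open>f \<noteq> 0\<close> by simp
      next
        case 2
        have "mat_of_rows_list 3 [[a,b,c],[d,e,f],[g,h,k]] = M5 f h"
          by (simp add: M5_def a1 b0 c0 g0 d0 True 2)
        then show ?thesis using inb5[of f h] hne \<open>f \<noteq> 0\<close> by simp
      qed
    next
      case False
      then have k0: "k = 0" using ek by simp
      have hne: "h \<noteq> 0" using R2 g0 k0 by auto
      have "e + f*h - 1 = 0" using E11' False by simp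
      then have hh: "h = (1 - e)/f" using \<open>f \<noteq> 0\<close> by (simp add: field_simps)
      have e1: "e \<noteq> 1" using hh hne by auto
      have "mat_of_rows_list 3 [[a,b,c],[d,e,f],[g,h,k]] = M1 e f"
        by (simp add: M1_def a1 b0 c0 g0 d0 k0 hh)
      then show ?thesis using inb1[of e f] e1 \<open>f \<noteq> 0\<close> by simp
    qed
  qed
next
  case True
  note f0 = True
  show ?thesis
  proof (cases "h = 0")
    case False
    then have a1: "a = 1" and d0: "d = 0" using C3 C6 by auto
    have kne: "k \<noteq> 0" using K2 c0 f0 by auto
    have "k * k = k * 1" using E33 f0 by simp
    then have k1: "k = 1" using kne by (metis mult_cancel_left)
    have ene: "e \<noteq> 0" using R1 d0 f0 by auto
    have "h * (b*h + e) = 0" using E32 k1 by (simp add: algebra_simps)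
    then have "b*h = - e" using False by (simp add: eq_neg_iff_add_eq_0)
    then have bb: "b = -(e/h)" using False by (simp add: field_simps)
    have "mat_of_rows_list 3 [[a,b,c],[d,e,f],[g,h,k]] = M3 e h"
      by (simp add: M3_def a1 d0 c0 g0 f0 k1 bb)
    then show ?thesis using inb3[of e h] ene False by simp
  next
    case True
    note h0 = True
    have kne: "k \<noteq> 0" using R2 g0 h0 by auto
    have "k * k = k * 1" using E33 f0 by simp
    then have k1: "k = 1" using kne by (metis mult_cancel_left)
    have E22': "e * (1 - b*d - e) = 0" using E22 f0 h0 k1 by (simp add: algebra_simps)
    show ?thesis
    proof (cases "a = 0")
      case True
      note a0 = True
      have bne: "b \<noteq> 0" using R0 a0 c0 by auto
      have dne: "d \<noteq> 0" using K0 a0 g0 by auto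
      consider "e = 0" | "e = 1 - b*d" using E22' by auto
      then show ?thesis
      proof cases
        case 1
        have "mat_of_rows_list 3 [[a,b,c],[d,e,f],[g,h,k]] = M8 b d"
          by (simp add: M8_def a0 c0 g0 f0 h0 k1 1)
        then show ?thesis using inb8[of b d] bne dne by simp
      next
        case 2
        have dd: "d = (1 - e)/b" using 2 bne by (simp add: field_simps)
        have e1: "e \<noteq> 1" using 2 bne dne by auto
        have "mat_of_rows_list 3 [[a,b,c],[d,e,f],[g,h,k]] = M2 e b"
          by (simp add: M2_def a0 c0 g0 f0 h0 k1 dd)
        then show ?thesis using inb2[of e b] bne e1 by simp
      qed
    next
      case False
      note ane = False
      show ?thesis
      proof (cases "e = 0")
        case True
        have bne: "b \<noteq> 0" using K1 True h0 by auto
        have dne: "d \<noteq> 0" using R1 True f0 by auto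
        have "a * (a + b*d - 1) = 0" using E00 by (simp add: algebra_simps)
        then have "a + b*d - 1 = 0" using ane by simp
        then have aa: "a = 1 - b*d" by (simp add: algebra_simps)
        have "mat_of_rows_list 3 [[a,b,c],[d,e,f],[g,h,k]] = M6 b d"
          by (simp add: M6_def aa c0 g0 f0 h0 k1 True)
        then show ?thesis using inb6[of b d] bne dne by simp
      next
        case False
        have b0: "b = 0" using E01 ane False h0 by simp
        have d0: "d = 0" using E10 ane False f0 by simp
        have "a * a = a * 1" using E00 b0 by simp
        then have a1: "a = 1" using ane by (metis mult_cancel_left)
        have e1: "e = 1" using E22' b0 False by simp
        then show ?thesis using NT a1 b0 c0 d0 f0 g0 h0 k1 by simp
      qed
    qed
  qed
qed


lemma mult_entry:
  assumes "A \<in> carrier_mat N N" "B \<in> carrier_mat N N" "r < N" "c < N" "m \<le> N"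
    and "\<And>k. m \<le> k \<Longrightarrow> k < N \<Longrightarrow> A$$(r,k) * B$$(k,c) = 0"
  shows "(A*B)$$(r,c) = (\<Sum>k<m. A$$(r,k) * B$$(k,c))"
proof -
  have "(A*B)$$(r,c) = (\<Sum>k\<in>{0..<N}. A$$(r,k) * B$$(k,c))"
    using assms by (simp add: scalar_prod_def)
  also have "{0..<N} = {..<m} \<union> {m..<N}" using assms(5) by auto
  also have "(\<Sum>k\<in>{..<m} \<union> {m..<N}. A$$(r,k) * B$$(k,c)) = (\<Sum>k<m. A$$(r,k) * B$$(k,c)) + (\<Sum>k\<in>{m..<N}. A$$(r,k) * B$$(k,c))"
    by (rule sum.union_disjoint) auto
  also have "(\<Sum>k\<in>{m..<N}. A$$(r,k) * B$$(k,c)) = 0" using assms(6) by (intro sum.neutral) auto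
  finally show ?thesis by simp
qed

lemma loc_carrier: "local_mat n M i \<in> carrier_mat (n+1) (n+1)"
  by (simp add: local_mat_def)

lemma loc_entry: "r < n+1 \<Longrightarrow> c < n+1 \<Longrightarrow> local_mat n M i $$ (r,c) =
     (if i - 1 \<le> r \<and> r \<le> i + 1 \<and> i - 1 \<le> c \<and> c \<le> i + 1
     then M $$ (r - (i - 1), c - (i - 1))
     else (if r = c then 1 else 0))"
  by (simp add: local_mat_def)

lemma loc_zero: "r < n+1 \<Longrightarrow> c < n+1 \<Longrightarrow> r \<noteq> c \<Longrightarrow> (i+1 < r \<or> i+1 < c) \<Longrightarrow> local_mat n M i $$ (r,c) = 0"
  by (auto simp: loc_entry)



lemma comm_entry:
  assumes "n \<ge> 4" "r < 5" "c < 5"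
  shows "(local_mat n M 1 * local_mat n M 3) $$ (r,c) = (\<Sum>k<5. local_mat n M 1 $$ (r,k) * local_mat n M 3 $$ (k,c))"
proof (rule mult_entry[OF loc_carrier loc_carrier])
  fix k assume "5 \<le> k" "k < n+1"
  then show "local_mat n M 1 $$ (r,k) * local_mat n M 3 $$ (k,c) = 0"
    using assms by (simp add: loc_zero)
qed (use assms in auto)

lemma comm_entry2:
  assumes "n \<ge> 4" "r < 5" "c < 5"
  shows "(local_mat n M 3 * local_mat n M 1) $$ (r,c) = (\<Sum>k<5. local_mat n M 3 $$ (r,k) * local_mat n M 1 $$ (k,c))"
proof (rule mult_entry[OF loc_carrier loc_carrier])
  fix k assume "5 \<le> k" "k < n+1"
  then show "local_mat n M 3 $$ (r,k) * local_mat n M 1 $$ (k,c) = 0"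
    using assms by (simp add: loc_zero)
qed (use assms in auto)

lemma braid_entry:
  assumes "n \<ge> 4" "r < 4" "c < 4" "i \<le> 2" "j \<le> 2"
  shows "(local_mat n M i * local_mat n M j * local_mat n M i) $$ (r,c) =
     (\<Sum>k<4. (\<Sum>l<4. local_mat n M i $$ (r,l) * local_mat n M j $$ (l,k)) * local_mat n M i $$ (k,c))"
proof -
  have "(local_mat n M i * local_mat n M j * local_mat n M i) $$ (r,c) =
     (\<Sum>k<4. (local_mat n M i * local_mat n M j) $$ (r,k) * local_mat n M i $$ (k,c))"
  proof (rule mult_entry[OF mult_carrier_mat[OF loc_carrier loc_carrier] loc_carrier])
    fix k assume "4 \<le> k" "k < n+1"
    then show "(local_mat n M i * local_mat n M j) $$ (r,k) * local_mat n M i $$ (k,c) = 0"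
      using assms by (simp add: loc_zero)
  qed (use assms in auto)
  also have "\<dots> = (\<Sum>k<4. (\<Sum>l<4. local_mat n M i $$ (r,l) * local_mat n M j $$ (l,k)) * local_mat n M i $$ (k,c))"
  proof (rule sum.cong[OF refl])
    fix k assume "k \<in> {..<4::nat}"
    have "(local_mat n M i * local_mat n M j) $$ (r,k) = (\<Sum>l<4. local_mat n M i $$ (r,l) * local_mat n M j $$ (l,k))"
    proof (rule mult_entry[OF loc_carrier loc_carrier])
      fix l assume "4 \<le> l" "l < n+1"
      then show "local_mat n M i $$ (r,l) * local_mat n M j $$ (l,k) = 0"
        using assms by (simp add: loc_zero)
    qed (use assms \<open>k \<in> {..<4}\<close> in auto)
    then show "(local_mat n M i * local_mat n M j) $$ (r,k) * local_mat n M i $$ (k,c) =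
      (\<Sum>l<4. local_mat n M i $$ (r,l) * local_mat n M j $$ (l,k)) * local_mat n M i $$ (k,c)" by simp
  qed
  finally show ?thesis .
qed

lemma extract_eqs:
  assumes n4: "n \<ge> 4"
    and comm: "local_mat n M 1 * local_mat n M 3 = local_mat n M 3 * local_mat n M 1"
    and br: "local_mat n M 1 * local_mat n M 2 * local_mat n M 1 = local_mat n M 2 * local_mat n M 1 * local_mat n M 2"
  shows "M$$(0,2) = 0 \<and> M$$(2,0) = 0 \<and> (M$$(1,2) * (M$$(0,0) - 1) = 0) \<and> (M$$(1,2) * M$$(0,1) = 0) \<and> (M$$(1,0) * M$$(2,1) = 0) \<and> (M$$(1,0) * (M$$(2,2) - 1) = 0) \<and> ((M$$(2,2) - 1) * M$$(0,1) = 0) \<and> ((M$$(0,0) - 1) * M$$(2,1) = 0) \<and> (M$$(0,0)*M$$(0,0) + M$$(0,0)*M$$(0,1)*M$$(1,0) = M$$(0,0)) \<and> (M$$(0,0)*M$$(0,1)*M$$(1,1) + M$$(0,1)*M$$(0,1)*M$$(2,1) = 0) \<and> (M$$(0,0)*M$$(1,0)*M$$(1,1) + M$$(1,0)*M$$(1,0)*M$$(1,2) = 0) \<and> (M$$(0,1)*M$$(1,0) + M$$(0,0)*M$$(1,1)*M$$(1,1) + M$$(1,0)*M$$(1,1)*M$$(1,2) + M$$(0,1)*M$$(1,1)*M$$(2,1) + M$$(1,1)*M$$(1,2)*M$$(2,1) = M$$(0,0)*M$$(0,0)*M$$(1,1) + M$$(0,0)*M$$(0,1)*M$$(2,1) +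 M$$(0,0)*M$$(1,0)*M$$(1,2) + M$$(0,1)*M$$(1,0)*M$$(2,2)) \<and> (M$$(0,0)*M$$(1,2)*M$$(2,1) + M$$(1,0)*M$$(1,2)*M$$(2,2) + M$$(0,1)*M$$(2,1)*M$$(2,2) + M$$(1,1)*M$$(2,2)*M$$(2,2) = M$$(0,1)*M$$(1,0)*M$$(1,1) + M$$(0,1)*M$$(1,1)*M$$(2,1) + M$$(1,0)*M$$(1,1)*M$$(1,2) + M$$(1,1)*M$$(1,1)*M$$(2,2) + M$$(1,2)*M$$(2,1)) \<and> (M$$(1,0)*M$$(1,2)*M$$(1,2) + M$$(1,1)*M$$(1,2)*M$$(2,2) = 0) \<and> (M$$(0,1)*M$$(2,1)*M$$(2,1) + M$$(1,1)*M$$(2,1)*M$$(2,2) = 0) \<and> (M$$(2,2) = M$$(1,2)*M$$(2,1)*M$$(2,2) + M$$(2,2)*M$$(2,2))"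
proof -
  have CE: "\<And>r c. r < 5 \<Longrightarrow> c < 5 \<Longrightarrow> (\<Sum>k<5. local_mat n M 1 $$ (r,k) * local_mat n M 3 $$ (k,c)) = (\<Sum>k<5. local_mat n M 3 $$ (r,k) * local_mat n M 1 $$ (k,c))"
  proof -
    fix r c :: nat assume rc: "r < 5" "c < 5"
    have "(local_mat n M 1 * local_mat n M 3) $$ (r,c) = (local_mat n M 3 * local_mat n M 1) $$ (r,c)" using comm by simp
    then show "?thesis r c" using comm_entry[OF n4 rc] comm_entry2[OF n4 rc] by simp
  qed
  have BE: "\<And>r c. r < 4 \<Longrightarrow> c < 4 \<Longrightarrow> (\<Sum>k<4. (\<Sum>l<4. local_mat n M 1 $$ (r,l) * local_mat n M 2 $$ (l,k)) * local_mat n M 1 $$ (k,c))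
     = (\<Sum>k<4. (\<Sum>l<4. local_mat n M 2 $$ (r,l) * local_mat n M 1 $$ (l,k)) * local_mat n M 2 $$ (k,c))"
  proof -
    fix r c :: nat assume rc: "r < 4" "c < 4"
    have "(local_mat n M 1 * local_mat n M 2 * local_mat n M 1) $$ (r,c) = (local_mat n M 2 * local_mat n M 1 * local_mat n M 2) $$ (r,c)" using br by simp
    then show "?thesis r c" using braid_entry[OF n4 rc, of 1 2 M] braid_entry[OF n4 rc, of 2 1 M] by simp
  qed
  have c0: "M$$(0,2) * M$$(0,2) = 0" using CE[of 0 4] n4 by (simp add: eval_nat_numeral loc_entry)
  have g0: "M$$(2,0) * M$$(2,0) = 0" using CE[of 4 0] n4 by (simp add: eval_nat_numeral loc_entry)
  have C1: "M$$(1,2) * (M$$(0,0) - 1) = 0" using CE[of 1 2] n4 c0 g0 by (simp add: eval_nat_numeral loc_entry algebra_simps)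
  have C2: "M$$(1,2) * M$$(0,1) = 0" using CE[of 1 3] n4 c0 g0 by (simp add: eval_nat_numeral loc_entry algebra_simps)
  have C3: "M$$(1,0) * M$$(2,1) = 0" using CE[of 3 1] n4 c0 g0 by (simp add: eval_nat_numeral loc_entry algebra_simps)
  have C4: "M$$(1,0) * (M$$(2,2) - 1) = 0" using CE[of 3 2] n4 c0 g0 by (simp add: eval_nat_numeral loc_entry algebra_simps)
  have C5: "(M$$(2,2) - 1) * M$$(0,1) = 0" using CE[of 2 3] n4 c0 g0 by (simp add: eval_nat_numeral loc_entry algebra_simps)
  have C6: "(M$$(0,0) - 1) * M$$(2,1) = 0" using CE[of 2 1] n4 c0 g0 by (simp add: eval_nat_numeral loc_entry algebra_simps)
  have E00: "M$$(0,0)*M$$(0,0) + M$$(0,0)*M$$(0,1)*M$$(1,0) = M$$(0,0)" using BE[of 0 0] n4 c0 g0 by (simp add: eval_nat_numeral loc_entry algebra_simps)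
  have E01: "M$$(0,0)*M$$(0,1)*M$$(1,1) + M$$(0,1)*M$$(0,1)*M$$(2,1) = 0" using BE[of 0 1] n4 c0 g0 by (simp add: eval_nat_numeral loc_entry algebra_simps)
  have E10: "M$$(0,0)*M$$(1,0)*M$$(1,1) + M$$(1,0)*M$$(1,0)*M$$(1,2) = 0" using BE[of 1 0] n4 c0 g0 by (simp add: eval_nat_numeral loc_entry algebra_simps)
  have E11: "M$$(0,1)*M$$(1,0) + M$$(0,0)*M$$(1,1)*M$$(1,1) + M$$(1,0)*M$$(1,1)*M$$(1,2) + M$$(0,1)*M$$(1,1)*M$$(2,1) + M$$(1,1)*M$$(1,2)*M$$(2,1) = M$$(0,0)*M$$(0,0)*M$$(1,1) + M$$(0,0)*M$$(0,1)*M$$(2,1) + M$$(0,0)*M$$(1,0)*M$$(1,2) + M$$(0,1)*M$$(1,0)*M$$(2,2)" using BE[of 1 1] n4 c0 g0 by (simp add: eval_nat_numeral loc_entry algebra_simps)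
  have E22: "M$$(0,0)*M$$(1,2)*M$$(2,1) + M$$(1,0)*M$$(1,2)*M$$(2,2) + M$$(0,1)*M$$(2,1)*M$$(2,2) + M$$(1,1)*M$$(2,2)*M$$(2,2) = M$$(0,1)*M$$(1,0)*M$$(1,1) + M$$(0,1)*M$$(1,1)*M$$(2,1) + M$$(1,0)*M$$(1,1)*M$$(1,2) + M$$(1,1)*M$$(1,1)*M$$(2,2) + M$$(1,2)*M$$(2,1)" using BE[of 2 2] n4 c0 g0 by (simp add: eval_nat_numeral loc_entry algebra_simps)
  have E23: "M$$(1,0)*M$$(1,2)*M$$(1,2) + M$$(1,1)*M$$(1,2)*M$$(2,2) = 0" using BE[of 2 3] n4 c0 g0 by (simp add: eval_nat_numeral loc_entry algebra_simps)
  have E32: "M$$(0,1)*M$$(2,1)*M$$(2,1) + M$$(1,1)*M$$(2,1)*M$$(2,2) = 0" using BE[of 3 2] n4 c0 g0 by (simp add: eval_nat_numeral loc_entry algebra_simps)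
  have E33: "M$$(2,2) = M$$(1,2)*M$$(2,1)*M$$(2,2) + M$$(2,2)*M$$(2,2)" using BE[of 3 3] n4 c0 g0 by (simp add: eval_nat_numeral loc_entry algebra_simps)
  show ?thesis using c0 g0 C1 C2 C3 C4 C5 C6 E00 E01 E10 E11 E22 E23 E32 E33 by simp
qed



lemma inv_dims:
  assumes "A \<in> carrier_mat N N" "invertible_mat A"
  obtains B where "B \<in> carrier_mat N N" "A * B = 1\<^sub>m N" "B * A = 1\<^sub>m N"
proof -
  from assms obtain B where AB: "A * B = 1\<^sub>m N" and BA: "B * A = 1\<^sub>m (dim_row B)"
    unfolding invertible_mat_def inverts_mat_def by auto
  have "dim_col (B * A) = N" using assms by simp
  then have r: "dim_row B = N" using BA by simp
  have "dim_col (A * B) = N" using AB by simp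
  then have c: "dim_col B = N" by simp
  show ?thesis using that[of B] AB BA r c by auto
qed

lemma inv_row:
  assumes "A \<in> carrier_mat N N" "invertible_mat A" "r < N"
  shows "\<exists>k<N. A$$(r,k) \<noteq> 0"
proof (rule ccontr)
  assume z: "\<not> ?thesis"
  obtain B where B: "B \<in> carrier_mat N N" "A * B = 1\<^sub>m N" "B * A = 1\<^sub>m N" using inv_dims assms by blast
  have "(A*B)$$(r,r) = (\<Sum>i\<in>{0..<N}. A$$(r,i) * B$$(i,r))"
    using assms B(1) by (simp add: scalar_prod_def)
  also have "\<dots> = 0" using z by (intro sum.neutral) auto
  finally show False using B assms by simp
qed

lemma inv_col:
  assumes "A \<in> carrier_mat N N" "invertible_mat A" "c < N"
  shows "\<exists>k<N. A$$(k,c) \<noteq> 0"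
proof (rule ccontr)
  assume z: "\<not> ?thesis"
  obtain B where B: "B \<in> carrier_mat N N" "A * B = 1\<^sub>m N" "B * A = 1\<^sub>m N" using inv_dims assms by blast
  have "(B*A)$$(c,c) = (\<Sum>i\<in>{0..<N}. B$$(c,i) * A$$(i,c))"
    using assms B(1) by (simp add: scalar_prod_def)
  also have "\<dots> = 0" using z by (intro sum.neutral) auto
  finally show False using B assms by simp
qed

lemma loc_row:
  assumes "n \<ge> 4" "invertible_mat (local_mat n M 1)" "r < 3"
  shows "\<not> (M$$(r,0) = 0 \<and> M$$(r,1) = 0 \<and> M$$(r,2) = 0)"
proof
  assume z: "M$$(r,0) = 0 \<and> M$$(r,1) = 0 \<and> M$$(r,2) = 0"
  obtain k where k: "k < n+1" "local_mat n M 1 $$ (r,k) \<noteq> 0"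
    using inv_row[OF loc_carrier assms(2), of r] assms by auto
  show False
  proof (cases "k < 3")
    case True
    then have "k = 0 \<or> k = 1 \<or> k = 2" by auto
    then show False using k z assms by (auto simp: loc_entry)
  next
    case False
    then show False using k assms by (simp add: loc_zero)
  qed
qed

lemma loc_col:
  assumes "n \<ge> 4" "invertible_mat (local_mat n M 1)" "c < 3"
  shows "\<not> (M$$(0,c) = 0 \<and> M$$(1,c) = 0 \<and> M$$(2,c) = 0)"
proof
  assume z: "M$$(0,c) = 0 \<and> M$$(1,c) = 0 \<and> M$$(2,c) = 0"
  obtain k where k: "k < n+1" "local_mat n M 1 $$ (k,c) \<noteq> 0"
    using inv_col[OF loc_carrier assms(2), of c] assms by auto
  show False
  proof (cases "k < 3")
    case True
    then have "k = 0 \<or> k = 1 \<or> k = 2" by auto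
    then show False using k z assms by (auto simp: loc_entry)
  next
    case False
    then show False using k assms by (simp add: loc_zero)
  qed
qed

lemma mat3_eq:
  assumes "M \<in> carrier_mat 3 3"
  shows "M = mat_of_rows_list 3 [[M$$(0,0),M$$(0,1),M$$(0,2)],[M$$(1,0),M$$(1,1),M$$(1,2)],[M$$(2,0),M$$(2,1),M$$(2,2)]]"
proof (rule eq_matI)
  fix i j assume ij: "i < dim_row (mat_of_rows_list 3 [[M$$(0,0),M$$(0,1),M$$(0,2)],[M$$(1,0),M$$(1,1),M$$(1,2)],[M$$(2,0),M$$(2,1),M$$(2,2)]])"
     "j < dim_col (mat_of_rows_list 3 [[M$$(0,0),M$$(0,1),M$$(0,2)],[M$$(1,0),M$$(1,1),M$$(1,2)],[M$$(2,0),M$$(2,1),M$$(2,2)]])"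
  then have "i < 3" "j < 3" by (auto simp: mat_of_rows_list_def)
  then have "i = 0 \<or> i = 1 \<or> i = 2" "j = 0 \<or> j = 1 \<or> j = 2" by auto
  then show "M $$ (i, j) = mat_of_rows_list 3 [[M$$(0,0),M$$(0,1),M$$(0,2)],[M$$(1,0),M$$(1,1),M$$(1,2)],[M$$(2,0),M$$(2,1),M$$(2,2)]] $$ (i, j)"
    by (auto simp: mat_of_rows_list_def)
qed (use assms in \<open>auto simp: mat_of_rows_list_def\<close>)

lemma id_loc:
  assumes "M \<in> carrier_mat 3 3" "\<And>r c. r < 3 \<Longrightarrow> c < 3 \<Longrightarrow> M$$(r,c) = (if r = c then 1 else 0)"
  shows "local_mat n M i = 1\<^sub>m (n+1)"
proof (rule eq_matI)
  fix r c assume "r < dim_row (1\<^sub>m (n+1) :: complex mat)" "c < dim_col (1\<^sub>m (n+1) :: complex mat)"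
  then show "local_mat n M i $$ (r,c) = 1\<^sub>m (n+1) $$ (r,c)"
    using assms(2)[of "r - (i - 1)" "c - (i - 1)"] by (auto simp: loc_entry)
qed (auto simp: local_mat_def)

theorem theorem4p1:
  fixes n :: nat and nu :: "nat \<Rightarrow> complex mat"
  assumes "n \<ge> 4"
    and "braid_rep n nu"
    and "homogeneous_3_local n nu"
    and "nontrivial_rep n nu"
  shows "\<exists>Mj \<in> standard_blocks. equiv_rep n nu (\<lambda>i. local_mat n Mj i)"
proof -
  obtain M where Mc: "M \<in> carrier_mat 3 3" and nuM: "\<And>i. i \<in> {1..n-1} \<Longrightarrow> nu i = local_mat n M i"
    using assms(3) unfolding homogeneous_3_local_def by blast
  have i1: "1 \<in> {1..n-1}" "2 \<in> {1..n-1}" "3 \<in> {1..n-1}" "1 \<in> {1..n-2}" using assms(1) by auto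
  have H1: "\<forall>i\<in>{1..n-1}. nu i \<in> carrier_mat (n+1) (n+1) \<and> invertible_mat (nu i)"
   and H2: "\<forall>i\<in>{1..n-2}. nu i * nu (i+1) * nu i = nu (i+1) * nu i * nu (i+1)"
   and H3: "\<forall>i\<in>{1..n-1}. \<forall>j\<in>{1..n-1}. (i + 2 \<le> j \<or> j + 2 \<le> i) \<longrightarrow> nu i * nu j = nu j * nu i"
    using assms(2) unfolding braid_rep_def by blast+
  have "nu 1 * nu 3 = nu 3 * nu 1" using H3 i1 by auto
  then have comm: "local_mat n M 1 * local_mat n M 3 = local_mat n M 3 * local_mat n M 1"
    using nuM i1 by simp
  have "nu 1 * nu (1+1) * nu 1 = nu (1+1) * nu 1 * nu (1+1)" using H2 i1 by blast
  then have "nu 1 * nu 2 * nu 1 = nu 2 * nu 1 * nu 2" by (simp only: one_add_one)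
  then have br: "local_mat n M 1 * local_mat n M 2 * local_mat n M 1 = local_mat n M 2 * local_mat n M 1 * local_mat n M 2"
    using nuM[OF i1(1)] nuM[OF i1(2)] by simp
  have inv: "invertible_mat (local_mat n M 1)" using H1 i1 nuM by auto
  note X = extract_eqs[OF assms(1) comm br]
  have NT: "\<not> (M$$(0,0) = 1 \<and> M$$(0,1) = 0 \<and> M$$(0,2) = 0 \<and> M$$(1,0) = 0 \<and> M$$(1,1) = 1 \<and> M$$(1,2) = 0 \<and> M$$(2,0) = 0 \<and> M$$(2,1) = 0 \<and> M$$(2,2) = 1)"
  proof
    assume z: "M$$(0,0) = 1 \<and> M$$(0,1) = 0 \<and> M$$(0,2) = 0 \<and> M$$(1,0) = 0 \<and> M$$(1,1) = 1 \<and> M$$(1,2) = 0 \<and> M$$(2,0) = 0 \<and> M$$(2,1) = 0 \<and> M$$(2,2) = 1"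
    have "\<And>r c. r < 3 \<Longrightarrow> c < 3 \<Longrightarrow> M$$(r,c) = (if r = c then 1 else 0)"
    proof -
      fix r c :: nat assume "r < 3" "c < 3"
      then have "r = 0 \<or> r = 1 \<or> r = 2" "c = 0 \<or> c = 1 \<or> c = 2" by auto
      then show "M$$(r,c) = (if r = c then 1 else 0)" using z by auto
    qed
    then have "\<And>i. local_mat n M i = 1\<^sub>m (n+1)" using id_loc Mc by blast
    then show False using assms(4) nuM unfolding nontrivial_rep_def by auto
  qed
  have blk: "M \<in> standard_blocks"
    apply (subst mat3_eq[OF Mc])
    apply (rule classify)
    using X loc_row[OF assms(1) inv, of 0] loc_row[OF assms(1) inv, of 1] loc_row[OF assms(1) inv, of 2]
      loc_col[OF assms(1) inv, of 0] loc_col[OF assms(1) inv, of 1] loc_col[OF assms(1) inv, of 2] NT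
    by auto
  have one: "\<And>i. local_mat n M i = 1\<^sub>m (n+1) * local_mat n M i * 1\<^sub>m (n+1)"
    by (metis left_mult_one_mat right_mult_one_mat loc_carrier)
  have "equiv_rep n nu (\<lambda>i. local_mat n M i)"
    unfolding equiv_rep_def
    by (rule exI[of _ "1\<^sub>m (n+1)"], rule exI[of _ "1\<^sub>m (n+1)"]) (use nuM one in auto)
  then show ?thesis using blk by blast
qed

end
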